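(* Consider the system of $N$ symplectic point vortices in $\mathbb R^{2m}=\mathbb C^m$: the Hamiltonian system on $(\mathbb R^{2m})^N$ with coordinates $x_{j,\alpha},y_{j,\alpha}$ ($1\le j\le N$, $1\le\alpha\le m$), Poisson bracket $$\{f,g\}=\sum_{j=1}^N\frac1{\Gamma_j}\sum_{\alpha=1}^m\Big(\frac{\partial f}{\partial x_{j,\alpha}}\frac{\partial g}{\partial y_{j,\alpha}}-\frac{\partial f}{\partial y_{j,\alpha}}\frac{\partial g}{\partial x_{j,\alpha}}\Big)$$ and Hamiltonian $\mathcal H=2C(2m)\sum_{j<k}\Gamma_j\Gamma_k|\tilde z_j-\tilde z_k|^{2-2m}$ for $m>1$ (resp. $\mathcal H=-\frac1{4\pi}\sum_{j<k}\Gamma_j\Gamma_k\ln|\tilde z_j-\tilde z_k|^2$ for $m=1$). This system is invariant with respect to the group $E(2m)=U(m)\ltimes\mathbb R^{2m}$ of unitary motions of $\mathbb R^{2m}=\mathbb C^m$ (acting diagonally on all vortices). The corresponding $m^2+2m$ conserved quantities, which Poisson commute with $\mathcal H$, are $$Q_\alpha=\sum_{j=1}^N\Gamma_jx_{j,\alpha},\quad P_\alpha=\sum_{j=1}^N\Gamma_jy_{j,\alpha}\quad(1\le\alpha\le m),$$ $$F^+_{\alpha\beta}=\sum_{j=1}^N\Gamma_j(x_{j,\alpha}x_{j,\beta}+y_{j,\alpha}y_{j,\beta})\quad(1\le\alpha\le\beta\le m),$$ $$F^-_{\alpha\beta}=\sum_{j=1}^N\Gamma_j(x_{j,\alpha}y_{j,\beta}-x_{j,\beta}y_{j,\alpha})\quad(1\le\alpha<\beta\le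 m).$$
   Context: $\tilde z_j=(x_{j,1},\dots,x_{j,m},y_{j,1},\dots,y_{j,m})\in\mathbb R^{2m}$ is the position of the $j$-th vortex, identified with $(z_{j,1},\dots,z_{j,m})\in\mathbb C^m$ via $z_{j,\alpha}=x_{j,\alpha}+iy_{j,\alpha}$; $\Gamma_j\neq0$ are real vortex strengths; $|\cdot|$ is the Euclidean norm; $C(2m)$ is the constant with $\Delta(C(2m)|\tilde z|^{2-2m})=\delta$ in $\mathbb R^{2m}$. The equations of motion are $\Gamma_j\dot x_{j,\alpha}=\partial\mathcal H/\partial y_{j,\alpha}$, $\Gamma_j\dot y_{j,\alpha}=-\partial\mathcal H/\partial x_{j,\alpha}$. *)

theory Defs
  imports "HOL-Analysis.Analysis"
begin

text \<open>A configuration of N vortices in C^m is z :: nat => nat => complex, with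
  z j alpha = x_{j,alpha} + i y_{j,alpha}, for 1 <= j <= N, 1 <= alpha <= m.\<close>

type_synonym config = "nat \<Rightarrow> nat \<Rightarrow> complex"

text \<open>C(n): the constant with Laplacian of C(n)|z|^(2-n) equal to delta in R^n (n >= 3),
  i.e. C(n) = -1/((n-2) |S^(n-1)|), with |S^(n-1)| = 2 pi^(n/2) / Gamma(n/2).
  For n = 2m: C(2m) = - Gamma m / (4 (m-1) pi^m).\<close>
definition Cconst :: "nat \<Rightarrow> real" where
  "Cconst n = - 1 / ((real n - 2) * (2 * pi powr (real n / 2) / Gamma (real n / 2)))"

definition dist2 :: "nat \<Rightarrow> config \<Rightarrow> nat \<Rightarrow> nat \<Rightarrow> real" where
  "dist2 m z j k = (\<Sum>\<alpha>=1..m. (cmod (z j \<alpha> - z k \<alpha>))\<^sup>2)"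

definition vortexH :: "nat \<Rightarrow> nat \<Rightarrow> (nat \<Rightarrow> real) \<Rightarrow> config \<Rightarrow> real" where
  "vortexH m N \<Gamma> z =
     (if m = 1 then
        - (1 / (4 * pi)) * (\<Sum>j=1..N. \<Sum>k=j+1..N. \<Gamma> j * \<Gamma> k * ln (dist2 m z j k))
      else
        2 * Cconst (2 * m) *
          (\<Sum>j=1..N. \<Sum>k=j+1..N. \<Gamma> j * \<Gamma> k * (sqrt (dist2 m z j k)) powr (2 - 2 * real m)))"

definition dX :: "(config \<Rightarrow> real) \<Rightarrow> config \<Rightarrow> nat \<Rightarrow> nat \<Rightarrow> real" where
  "dX f z j \<alpha> = deriv (\<lambda>t. f (z(j := (z j)(\<alpha> := Complex t (Im (z j \<alpha>)))))) (Re (z j \<alpha>))"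

definition dY :: "(config \<Rightarrow> real) \<Rightarrow> config \<Rightarrow> nat \<Rightarrow> nat \<Rightarrow> real" where
  "dY f z j \<alpha> = deriv (\<lambda>t. f (z(j := (z j)(\<alpha> := Complex (Re (z j \<alpha>)) t)))) (Im (z j \<alpha>))"

definition poisson :: "nat \<Rightarrow> nat \<Rightarrow> (nat \<Rightarrow> real) \<Rightarrow> (config \<Rightarrow> real) \<Rightarrow> (config \<Rightarrow> real) \<Rightarrow> config \<Rightarrow> real" where
  "poisson m N \<Gamma> f g z =
     (\<Sum>j=1..N. (1 / \<Gamma> j) * (\<Sum>\<alpha>=1..m. dX f z j \<alpha> * dY g z j \<alpha> - dY f z j \<alpha> * dX g z j \<alpha>))"

definition Qc :: "nat \<Rightarrow> (nat \<Rightarrow> real) \<Rightarrow> nat \<Rightarrow> config \<Rightarrow> real" where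
  "Qc N \<Gamma> \<alpha> z = (\<Sum>j=1..N. \<Gamma> j * Re (z j \<alpha>))"

definition Pc :: "nat \<Rightarrow> (nat \<Rightarrow> real) \<Rightarrow> nat \<Rightarrow> config \<Rightarrow> real" where
  "Pc N \<Gamma> \<alpha> z = (\<Sum>j=1..N. \<Gamma> j * Im (z j \<alpha>))"

definition Fplus :: "nat \<Rightarrow> (nat \<Rightarrow> real) \<Rightarrow> nat \<Rightarrow> nat \<Rightarrow> config \<Rightarrow> real" where
  "Fplus N \<Gamma> \<alpha> \<beta> z = (\<Sum>j=1..N. \<Gamma> j *
      (Re (z j \<alpha>) * Re (z j \<beta>) + Im (z j \<alpha>) * Im (z j \<beta>)))"

definition Fminus :: "nat \<Rightarrow> (nat \<Rightarrow> real) \<Rightarrow> nat \<Rightarrow> nat \<Rightarrow> config \<Rightarrow> real" where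
  "Fminus N \<Gamma> \<alpha> \<beta> z = (\<Sum>j=1..N. \<Gamma> j *
      (Re (z j \<alpha>) * Im (z j \<beta>) - Re (z j \<beta>) * Im (z j \<alpha>)))"

definition noncollision :: "nat \<Rightarrow> nat \<Rightarrow> config \<Rightarrow> bool" where
  "noncollision m N z \<longleftrightarrow>
     (\<forall>j\<in>{1..N}. \<forall>k\<in>{1..N}. j \<noteq> k \<longrightarrow> (\<exists>\<alpha>\<in>{1..m}. z j \<alpha> \<noteq> z k \<alpha>))"

definition unitary_mat :: "nat \<Rightarrow> (nat \<Rightarrow> nat \<Rightarrow> complex) \<Rightarrow> bool" where
  "unitary_mat m U \<longleftrightarrow>
     (\<forall>\<alpha>\<in>{1..m}. \<forall>\<beta>\<in>{1..m}.
        (\<Sum>\<gamma>=1..m. cnj (U \<gamma> \<alpha>) * U \<gamma> \<beta>) = (if \<alpha> = \<beta> then 1 else 0))"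

definition motion :: "nat \<Rightarrow> (nat \<Rightarrow> nat \<Rightarrow> complex) \<Rightarrow> (nat \<Rightarrow> complex) \<Rightarrow> config \<Rightarrow> config" where
  "motion m U b z = (\<lambda>j \<alpha>. (\<Sum>\<beta>=1..m. U \<alpha> \<beta> * z j \<beta>) + b \<alpha>)"

end

theory Submission
  imports Defs
begin

definition updX :: "config \<Rightarrow> nat \<Rightarrow> nat \<Rightarrow> real \<Rightarrow> config" where
  "updX z j \<alpha> t = z(j := (z j)(\<alpha> := Complex t (Im (z j \<alpha>))))"
definition updY :: "config \<Rightarrow> nat \<Rightarrow> nat \<Rightarrow> real \<Rightarrow> config" where
  "updY z j \<alpha> t = z(j := (z j)(\<alpha> := Complex (Re (z j \<alpha>)) t))"

lemma dX_alt: "dX f z j \<alpha> = deriv (\<lambda>t. f (updX z j \<alpha> t)) (Re (z j \<alpha>))"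
  by (simp add: dX_def updX_def)
lemma dY_alt: "dY f z j \<alpha> = deriv (\<lambda>t. f (updY z j \<alpha> t)) (Im (z j \<alpha>))"
  by (simp add: dY_def updY_def)

lemma Re_updX: "Re (updX z j \<alpha> t i \<gamma>) = (if i = j \<and> \<gamma> = \<alpha> then t else Re (z i \<gamma>))"
  by (simp add: updX_def)
lemma Im_updX: "Im (updX z j \<alpha> t i \<gamma>) = Im (z i \<gamma>)"
  by (simp add: updX_def)
lemma Re_updY: "Re (updY z j \<alpha> t i \<gamma>) = Re (z i \<gamma>)"
  by (simp add: updY_def)
lemma Im_updY: "Im (updY z j \<alpha> t i \<gamma>) = (if i = j \<and> \<gamma> = \<alpha> then t else Im (z i \<gamma>))"
  by (simp add: updY_def)

definition ind :: "nat \<Rightarrow> nat \<Rightarrow> nat \<Rightarrow> nat \<Rightarrow> real" where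
  "ind j \<alpha> i \<gamma> = (if i = j \<and> \<gamma> = \<alpha> then 1 else 0)"

lemma D_Re_updX: "((\<lambda>t. Re (updX z j \<alpha> t i \<gamma>)) has_real_derivative ind j \<alpha> i \<gamma>) (at t0)"
  by (cases "i = j \<and> \<gamma> = \<alpha>") (auto simp: Re_updX ind_def intro: derivative_eq_intros)
lemma D_Im_updX: "((\<lambda>t. Im (updX z j \<alpha> t i \<gamma>)) has_real_derivative 0) (at t0)"
  by (simp add: Im_updX)
lemma D_Re_updY: "((\<lambda>t. Re (updY z j \<alpha> t i \<gamma>)) has_real_derivative 0) (at t0)"
  by (simp add: Re_updY)
lemma D_Im_updY: "((\<lambda>t. Im (updY z j \<alpha> t i \<gamma>)) has_real_derivative ind j \<alpha> i \<gamma>) (at t0)"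
  by (cases "i = j \<and> \<gamma> = \<alpha>") (auto simp: Im_updY ind_def intro: derivative_eq_intros)

lemma updX_self: "updX z j \<alpha> (Re (z j \<alpha>)) = z"
  by (auto simp: updX_def fun_eq_iff complex_eq_iff)
lemma updY_self: "updY z j \<alpha> (Im (z j \<alpha>)) = z"
  by (auto simp: updY_def fun_eq_iff complex_eq_iff)

lemma dist2_alt: "dist2 m z a b = (\<Sum>\<gamma>=1..m. (Re (z a \<gamma>) - Re (z b \<gamma>))\<^sup>2 + (Im (z a \<gamma>) - Im (z b \<gamma>))\<^sup>2)"
  by (simp add: dist2_def cmod_power2)

lemma sum_ind1:
  assumes "\<alpha> \<in> {1..m}"
  shows "(\<Sum>\<gamma>=1..m. ind j \<alpha> i \<gamma> * f \<gamma>) = (if i = j then f \<alpha> else 0)"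
proof -
  have "(\<Sum>\<gamma>=1..m. ind j \<alpha> i \<gamma> * f \<gamma>) = (\<Sum>\<gamma>=1..m. (if \<gamma> = \<alpha> then (if i = j then f \<alpha> else 0) else 0))"
    by (rule sum.cong) (auto simp: ind_def)
  also have "\<dots> = (if i = j then f \<alpha> else 0)" using assms by (simp add: sum.delta)
  finally show ?thesis .
qed

lemma sq_diff_deriv:
  assumes "(f has_real_derivative f') (at t0)" "(g has_real_derivative g') (at t0)"
  shows "((\<lambda>t. (f t - g t)\<^sup>2) has_real_derivative 2 * (f t0 - g t0) * (f' - g')) (at t0)"
  using DERIV_power[OF DERIV_diff[OF assms], of 2] by (simp add: algebra_simps)

lemma D_dist2X:
  assumes "\<alpha> \<in> {1..m}"
  shows "((\<lambda>t. dist2 m (updX z j \<alpha> t) a b) has_real_derivative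
     2 * (Re (z a \<alpha>) - Re (z b \<alpha>)) * ((if a = j then 1 else 0) - (if b = j then 1 else 0))) (at (Re (z j \<alpha>)))"
proof -
  have "((\<lambda>t. dist2 m (updX z j \<alpha> t) a b) has_real_derivative
     (\<Sum>\<gamma>=1..m. 2 * (Re (updX z j \<alpha> (Re (z j \<alpha>)) a \<gamma>) - Re (updX z j \<alpha> (Re (z j \<alpha>)) b \<gamma>)) * (ind j \<alpha> a \<gamma> - ind j \<alpha> b \<gamma>)
       + 2 * (Im (updX z j \<alpha> (Re (z j \<alpha>)) a \<gamma>) - Im (updX z j \<alpha> (Re (z j \<alpha>)) b \<gamma>)) * (0 - 0))) (at (Re (z j \<alpha>)))"
    unfolding dist2_alt
    by (intro DERIV_sum DERIV_add sq_diff_deriv D_Re_updX D_Im_updX)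
  also have "(\<Sum>\<gamma>=1..m. 2 * (Re (updX z j \<alpha> (Re (z j \<alpha>)) a \<gamma>) - Re (updX z j \<alpha> (Re (z j \<alpha>)) b \<gamma>)) * (ind j \<alpha> a \<gamma> - ind j \<alpha> b \<gamma>)
       + 2 * (Im (updX z j \<alpha> (Re (z j \<alpha>)) a \<gamma>) - Im (updX z j \<alpha> (Re (z j \<alpha>)) b \<gamma>)) * (0 - 0))
    = (\<Sum>\<gamma>=1..m. ind j \<alpha> a \<gamma> * (2 * (Re (z a \<gamma>) - Re (z b \<gamma>))) - ind j \<alpha> b \<gamma> * (2 * (Re (z a \<gamma>) - Re (z b \<gamma>))))"
    by (simp add: updX_self algebra_simps)
  also have "\<dots> = 2 * (Re (z a \<alpha>) - Re (z b \<alpha>)) * ((if a = j then 1 else 0) - (if b = j then 1 else 0))"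
    by (simp only: sum_subtractf sum_ind1[OF assms]) simp
  finally show ?thesis .
qed

lemma D_dist2Y:
  assumes "\<alpha> \<in> {1..m}"
  shows "((\<lambda>t. dist2 m (updY z j \<alpha> t) a b) has_real_derivative
     2 * (Im (z a \<alpha>) - Im (z b \<alpha>)) * ((if a = j then 1 else 0) - (if b = j then 1 else 0))) (at (Im (z j \<alpha>)))"
proof -
  have "((\<lambda>t. dist2 m (updY z j \<alpha> t) a b) has_real_derivative
     (\<Sum>\<gamma>=1..m. 2 * (Re (updY z j \<alpha> (Im (z j \<alpha>)) a \<gamma>) - Re (updY z j \<alpha> (Im (z j \<alpha>)) b \<gamma>)) * (0 - 0)
       + 2 * (Im (updY z j \<alpha> (Im (z j \<alpha>)) a \<gamma>) - Im (updY z j \<alpha> (Im (z j \<alpha>)) b \<gamma>)) * (ind j \<alpha> a \<gamma> - ind j \<alpha> b \<gamma>))) (at (Im (z j \<alpha>)))"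
    unfolding dist2_alt
    by (intro DERIV_sum DERIV_add sq_diff_deriv D_Re_updY D_Im_updY)
  also have "(\<Sum>\<gamma>=1..m. 2 * (Re (updY z j \<alpha> (Im (z j \<alpha>)) a \<gamma>) - Re (updY z j \<alpha> (Im (z j \<alpha>)) b \<gamma>)) * (0 - 0)
       + 2 * (Im (updY z j \<alpha> (Im (z j \<alpha>)) a \<gamma>) - Im (updY z j \<alpha> (Im (z j \<alpha>)) b \<gamma>)) * (ind j \<alpha> a \<gamma> - ind j \<alpha> b \<gamma>))
    = (\<Sum>\<gamma>=1..m. ind j \<alpha> a \<gamma> * (2 * (Im (z a \<gamma>) - Im (z b \<gamma>))) - ind j \<alpha> b \<gamma> * (2 * (Im (z a \<gamma>) - Im (z b \<gamma>))))"
    by (simp add: updY_self algebra_simps)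
  also have "\<dots> = 2 * (Im (z a \<alpha>) - Im (z b \<alpha>)) * ((if a = j then 1 else 0) - (if b = j then 1 else 0))"
    by (simp only: sum_subtractf sum_ind1[OF assms]) simp
  finally show ?thesis .
qed

definition Gm :: "nat \<Rightarrow> real \<Rightarrow> real" where
  "Gm m d = (if m = 1 then - (1 / (4 * pi)) * ln d else 2 * Cconst (2 * m) * sqrt d powr (2 - 2 * real m))"

definition Gd :: "nat \<Rightarrow> real \<Rightarrow> real" where
  "Gd m d = deriv (Gm m) d"

lemma Gm_deriv:
  assumes "d > 0" shows "(Gm m has_real_derivative Gd m d) (at d)"
proof -
  have "\<exists>D. (Gm m has_real_derivative D) (at d)"
  proof (cases "m = 1")
    case True
    then show ?thesis unfolding Gm_def using assms
      by (auto intro!: derivative_eq_intros)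
  next
    case False
    have "((\<lambda>d. 2 * Cconst (2 * m) * sqrt d powr (2 - 2 * real m)) has_real_derivative
       2 * Cconst (2 * m) * ((2 - 2 * real m) * sqrt d powr ((2 - 2 * real m) - of_nat 1) * (inverse (sqrt d) / 2))) (at d)"
      by (intro DERIV_cmult DERIV_fun_powr DERIV_real_sqrt) (use assms in auto)
    then show ?thesis unfolding Gm_def using False by auto
  qed
  then show ?thesis unfolding Gd_def using DERIV_imp_deriv by blast
qed

lemma vortexH_alt: "vortexH m N \<Gamma> z = (\<Sum>a=1..N. \<Sum>b=a+1..N. \<Gamma> a * \<Gamma> b * Gm m (dist2 m z a b))"
  by (cases "m = 1") (simp_all add: vortexH_def Gm_def sum_distrib_left mult_ac)

lemma nc_pos:
  assumes "noncollision m N z" "a \<in> {1..N}" "b \<in> {1..N}" "a \<noteq> b"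
  shows "dist2 m z a b > 0"
proof -
  obtain \<gamma> where g: "\<gamma> \<in> {1..m}" "z a \<gamma> \<noteq> z b \<gamma>" using assms unfolding noncollision_def by blast
  have "0 < (cmod (z a \<gamma> - z b \<gamma>))\<^sup>2" using g by simp
  also have "\<dots> \<le> dist2 m z a b" unfolding dist2_def
    by (rule member_le_sum) (use g in auto)
  finally show ?thesis .
qed

definition KK :: "nat \<Rightarrow> (nat \<Rightarrow> real) \<Rightarrow> config \<Rightarrow> nat \<Rightarrow> nat \<Rightarrow> real" where
  "KK m \<Gamma> z a b = \<Gamma> a * \<Gamma> b * Gd m (dist2 m z a b) * 2"

definition dl :: "nat \<Rightarrow> nat \<Rightarrow> nat \<Rightarrow> real" where
  "dl a b j = (if a = j then 1 else 0) - (if b = j then 1 else 0)"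

lemma dXH:
  assumes nc: "noncollision m N z" and al: "\<alpha> \<in> {1..m}"
  shows "dX (vortexH m N \<Gamma>) z j \<alpha> = (\<Sum>a=1..N. \<Sum>b=a+1..N. KK m \<Gamma> z a b * (Re (z a \<alpha>) - Re (z b \<alpha>)) * dl a b j)"
proof -
  have "((\<lambda>t. vortexH m N \<Gamma> (updX z j \<alpha> t)) has_real_derivative
     (\<Sum>a=1..N. \<Sum>b=a+1..N. \<Gamma> a * \<Gamma> b * (Gd m (dist2 m (updX z j \<alpha> (Re (z j \<alpha>))) a b) *
        (2 * (Re (z a \<alpha>) - Re (z b \<alpha>)) * ((if a = j then 1 else 0) - (if b = j then 1 else 0)))))) (at (Re (z j \<alpha>)))"
    unfolding vortexH_alt
  proof (intro DERIV_sum DERIV_cmult DERIV_chain'[OF D_dist2X[OF al]] Gm_deriv)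
    fix a b assume "a \<in> {1..N}" "b \<in> {a+1..N}"
    then show "0 < dist2 m (updX z j \<alpha> (Re (z j \<alpha>))) a b"
      unfolding updX_self by (intro nc_pos[OF nc]) auto
  qed
  note DERIV_imp_deriv[OF this]
  then show ?thesis unfolding dX_alt updX_self KK_def dl_def
    by (auto intro!: sum.cong simp: algebra_simps)
qed

lemma dYH:
  assumes nc: "noncollision m N z" and al: "\<alpha> \<in> {1..m}"
  shows "dY (vortexH m N \<Gamma>) z j \<alpha> = (\<Sum>a=1..N. \<Sum>b=a+1..N. KK m \<Gamma> z a b * (Im (z a \<alpha>) - Im (z b \<alpha>)) * dl a b j)"
proof -
  have "((\<lambda>t. vortexH m N \<Gamma> (updY z j \<alpha> t)) has_real_derivative
     (\<Sum>a=1..N. \<Sum>b=a+1..N. \<Gamma> a * \<Gamma> b * (Gd m (dist2 m (updY z j \<alpha> (Im (z j \<alpha>))) a b) *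
        (2 * (Im (z a \<alpha>) - Im (z b \<alpha>)) * ((if a = j then 1 else 0) - (if b = j then 1 else 0)))))) (at (Im (z j \<alpha>)))"
    unfolding vortexH_alt
  proof (intro DERIV_sum DERIV_cmult DERIV_chain'[OF D_dist2Y[OF al]] Gm_deriv)
    fix a b assume "a \<in> {1..N}" "b \<in> {a+1..N}"
    then show "0 < dist2 m (updY z j \<alpha> (Im (z j \<alpha>))) a b"
      unfolding updY_self by (intro nc_pos[OF nc]) auto
  qed
  note DERIV_imp_deriv[OF this]
  then show ?thesis unfolding dY_alt updY_self KK_def dl_def
    by (auto intro!: sum.cong simp: algebra_simps)
qed

lemma swap_delta:
  "(\<Sum>j=1..N. \<Sum>a=1..N. \<Sum>b=a+1..N. h j a b * dl a b j) = (\<Sum>a=1..N. \<Sum>b=a+1..N. h a a b - h b a b)"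
proof -
  have "(\<Sum>j=1..N. \<Sum>a=1..N. \<Sum>b=a+1..N. h j a b * dl a b j) = (\<Sum>a=1..N. \<Sum>j=1..N. \<Sum>b=a+1..N. h j a b * dl a b j)"
    by (rule sum.swap)
  also have "\<dots> = (\<Sum>a=1..N. \<Sum>b=a+1..N. \<Sum>j=1..N. h j a b * dl a b j)"
    by (rule sum.cong[OF refl], rule sum.swap)
  also have "\<dots> = (\<Sum>a=1..N. \<Sum>b=a+1..N. h a a b - h b a b)"
  proof (rule sum.cong[OF refl], rule sum.cong[OF refl])
    fix a b assume "a \<in> {1..N}" "b \<in> {a+1..N}"
    then have ab: "a \<in> {1..N}" "b \<in> {1..N}" by auto
    have "(\<Sum>j=1..N. h j a b * dl a b j) = (\<Sum>j=1..N. (if a = j then h j a b else 0)) - (\<Sum>j=1..N. (if b = j then h j a b else 0))"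
      unfolding sum_subtractf[symmetric] by (rule sum.cong) (auto simp: dl_def)
    also have "\<dots> = h a a b - h b a b" using ab by (simp add: sum.delta)
    finally show "(\<Sum>j=1..N. h j a b * dl a b j) = h a a b - h b a b" .
  qed
  finally show ?thesis .
qed

lemma sum_single:
  fixes N j :: nat
  assumes "j \<in> {1..N}" "\<And>i. i \<noteq> j \<Longrightarrow> f i = 0"
  shows "(\<Sum>i=1..N. f i) = (f j :: real)"
proof -
  have "(\<Sum>i=1..N. f i) = (\<Sum>i=1..N. if i = j then f j else 0)"
    by (rule sum.cong) (use assms in auto)
  also have "\<dots> = f j" using assms(1) by (subst sum.delta) auto
  finally show ?thesis .
qed

lemma dX_Q: assumes "j \<in> {1..N}"
  shows "dX (Qc N \<Gamma> \<alpha>) z j \<gamma> = (if \<alpha> = \<gamma> then \<Gamma> j else 0)"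
proof -
  have "((\<lambda>t. Qc N \<Gamma> \<alpha> (updX z j \<gamma> t)) has_real_derivative (\<Sum>i=1..N. \<Gamma> i * ind j \<gamma> i \<alpha>)) (at (Re (z j \<gamma>)))"
    unfolding Qc_def by (intro DERIV_sum DERIV_cmult D_Re_updX)
  note DERIV_imp_deriv[OF this]
  moreover have "(\<Sum>i=1..N. \<Gamma> i * ind j \<gamma> i \<alpha>) = (if \<alpha> = \<gamma> then \<Gamma> j else 0)"
    by (subst sum_single[OF assms]) (auto simp: ind_def)
  ultimately show ?thesis by (simp add: dX_alt)
qed

lemma dY_Q: shows "dY (Qc N \<Gamma> \<alpha>) z j \<gamma> = 0"
proof -
  have "((\<lambda>t. Qc N \<Gamma> \<alpha> (updY z j \<gamma> t)) has_real_derivative (\<Sum>i=1..N. \<Gamma> i * 0)) (at (Im (z j \<gamma>)))"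
    unfolding Qc_def by (intro DERIV_sum DERIV_cmult D_Re_updY)
  note DERIV_imp_deriv[OF this]
  then show ?thesis by (simp add: dY_alt)
qed

lemma dY_P: assumes "j \<in> {1..N}"
  shows "dY (Pc N \<Gamma> \<alpha>) z j \<gamma> = (if \<alpha> = \<gamma> then \<Gamma> j else 0)"
proof -
  have "((\<lambda>t. Pc N \<Gamma> \<alpha> (updY z j \<gamma> t)) has_real_derivative (\<Sum>i=1..N. \<Gamma> i * ind j \<gamma> i \<alpha>)) (at (Im (z j \<gamma>)))"
    unfolding Pc_def by (intro DERIV_sum DERIV_cmult D_Im_updY)
  note DERIV_imp_deriv[OF this]
  moreover have "(\<Sum>i=1..N. \<Gamma> i * ind j \<gamma> i \<alpha>) = (if \<alpha> = \<gamma> then \<Gamma> j else 0)"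
    by (subst sum_single[OF assms]) (auto simp: ind_def)
  ultimately show ?thesis by (simp add: dY_alt)
qed

lemma dX_P: shows "dX (Pc N \<Gamma> \<alpha>) z j \<gamma> = 0"
proof -
  have "((\<lambda>t. Pc N \<Gamma> \<alpha> (updX z j \<gamma> t)) has_real_derivative (\<Sum>i=1..N. \<Gamma> i * 0)) (at (Re (z j \<gamma>)))"
    unfolding Pc_def by (intro DERIV_sum DERIV_cmult D_Im_updX)
  note DERIV_imp_deriv[OF this]
  then show ?thesis by (simp add: dX_alt)
qed

lemma dX_Fp: assumes "j \<in> {1..N}"
  shows "dX (Fplus N \<Gamma> \<alpha> \<beta>) z j \<gamma> = (if \<alpha> = \<gamma> then \<Gamma> j * Re (z j \<beta>) else 0) + (if \<beta> = \<gamma> then \<Gamma> j * Re (z j \<alpha>) else 0)"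
proof -
  have "((\<lambda>t. Fplus N \<Gamma> \<alpha> \<beta> (updX z j \<gamma> t)) has_real_derivative (\<Sum>i=1..N. \<Gamma> i *
     ((Re (updX z j \<gamma> (Re (z j \<gamma>)) i \<alpha>) * ind j \<gamma> i \<beta> + ind j \<gamma> i \<alpha> * Re (updX z j \<gamma> (Re (z j \<gamma>)) i \<beta>))
      + (Im (updX z j \<gamma> (Re (z j \<gamma>)) i \<alpha>) * 0 + 0 * Im (updX z j \<gamma> (Re (z j \<gamma>)) i \<beta>))))) (at (Re (z j \<gamma>)))"
    unfolding Fplus_def by (intro DERIV_sum DERIV_cmult DERIV_add DERIV_mult' D_Re_updX D_Im_updX)
  note DERIV_imp_deriv[OF this]
  then show ?thesis unfolding dX_alt updX_self
    by (subst (asm) sum_single[OF assms]) (auto simp: ind_def)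
qed

lemma dY_Fp: assumes "j \<in> {1..N}"
  shows "dY (Fplus N \<Gamma> \<alpha> \<beta>) z j \<gamma> = (if \<alpha> = \<gamma> then \<Gamma> j * Im (z j \<beta>) else 0) + (if \<beta> = \<gamma> then \<Gamma> j * Im (z j \<alpha>) else 0)"
proof -
  have "((\<lambda>t. Fplus N \<Gamma> \<alpha> \<beta> (updY z j \<gamma> t)) has_real_derivative (\<Sum>i=1..N. \<Gamma> i *
     ((Re (updY z j \<gamma> (Im (z j \<gamma>)) i \<alpha>) * 0 + 0 * Re (updY z j \<gamma> (Im (z j \<gamma>)) i \<beta>))
      + (Im (updY z j \<gamma> (Im (z j \<gamma>)) i \<alpha>) * ind j \<gamma> i \<beta> + ind j \<gamma> i \<alpha> * Im (updY z j \<gamma> (Im (z j \<gamma>)) i \<beta>))))) (at (Im (z j \<gamma>)))"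
    unfolding Fplus_def by (intro DERIV_sum DERIV_cmult DERIV_add DERIV_mult' D_Re_updY D_Im_updY)
  note DERIV_imp_deriv[OF this]
  then show ?thesis unfolding dY_alt updY_self
    by (subst (asm) sum_single[OF assms]) (auto simp: ind_def)
qed

lemma dX_Fm: assumes "j \<in> {1..N}"
  shows "dX (Fminus N \<Gamma> \<alpha> \<beta>) z j \<gamma> = (if \<alpha> = \<gamma> then \<Gamma> j * Im (z j \<beta>) else 0) - (if \<beta> = \<gamma> then \<Gamma> j * Im (z j \<alpha>) else 0)"
proof -
  have "((\<lambda>t. Fminus N \<Gamma> \<alpha> \<beta> (updX z j \<gamma> t)) has_real_derivative (\<Sum>i=1..N. \<Gamma> i *
     ((Re (updX z j \<gamma> (Re (z j \<gamma>)) i \<alpha>) * 0 + ind j \<gamma> i \<alpha> * Im (updX z j \<gamma> (Re (z j \<gamma>)) i \<beta>))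
      - (Re (updX z j \<gamma> (Re (z j \<gamma>)) i \<beta>) * 0 + ind j \<gamma> i \<beta> * Im (updX z j \<gamma> (Re (z j \<gamma>)) i \<alpha>))))) (at (Re (z j \<gamma>)))"
    unfolding Fminus_def by (intro DERIV_sum DERIV_cmult DERIV_diff DERIV_mult' D_Re_updX D_Im_updX)
  note DERIV_imp_deriv[OF this]
  then show ?thesis unfolding dX_alt updX_self
    by (subst (asm) sum_single[OF assms]) (auto simp: ind_def)
qed

lemma dY_Fm: assumes "j \<in> {1..N}"
  shows "dY (Fminus N \<Gamma> \<alpha> \<beta>) z j \<gamma> = (if \<beta> = \<gamma> then \<Gamma> j * Re (z j \<alpha>) else 0) - (if \<alpha> = \<gamma> then \<Gamma> j * Re (z j \<beta>) else 0)"
proof -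
  have "((\<lambda>t. Fminus N \<Gamma> \<alpha> \<beta> (updY z j \<gamma> t)) has_real_derivative (\<Sum>i=1..N. \<Gamma> i *
     ((Re (updY z j \<gamma> (Im (z j \<gamma>)) i \<alpha>) * ind j \<gamma> i \<beta> + 0 * Im (updY z j \<gamma> (Im (z j \<gamma>)) i \<beta>))
      - (Re (updY z j \<gamma> (Im (z j \<gamma>)) i \<beta>) * ind j \<gamma> i \<alpha> + 0 * Im (updY z j \<gamma> (Im (z j \<gamma>)) i \<alpha>))))) (at (Im (z j \<gamma>)))"
    unfolding Fminus_def by (intro DERIV_sum DERIV_cmult DERIV_diff DERIV_mult' D_Re_updY D_Im_updY)
  note DERIV_imp_deriv[OF this]
  then show ?thesis unfolding dY_alt updY_self
    by (subst (asm) sum_single[OF assms]) (auto simp: ind_def)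
qed

lemma if0_mult: "(if P then c else (0::real)) * e = (if P then c * e else 0)" by simp

lemma pj_Q:
  assumes j: "j \<in> {1..N}" and al: "\<alpha> \<in> {1..m}" and g: "\<Gamma> j \<noteq> 0" and nc: "noncollision m N z"
  shows "(1 / \<Gamma> j) * (\<Sum>\<gamma>=1..m. dX (Qc N \<Gamma> \<alpha>) z j \<gamma> * dY (vortexH m N \<Gamma>) z j \<gamma> - dY (Qc N \<Gamma> \<alpha>) z j \<gamma> * dX (vortexH m N \<Gamma>) z j \<gamma>)
    = (\<Sum>a=1..N. \<Sum>b=a+1..N. (KK m \<Gamma> z a b * (Im (z a \<alpha>) - Im (z b \<alpha>))) * dl a b j)"
  using al g by (simp add: dX_Q[OF j] dY_Q if0_mult dYH[OF nc al])

lemma pj_P: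
  assumes j: "j \<in> {1..N}" and al: "\<alpha> \<in> {1..m}" and g: "\<Gamma> j \<noteq> 0" and nc: "noncollision m N z"
  shows "(1 / \<Gamma> j) * (\<Sum>\<gamma>=1..m. dX (Pc N \<Gamma> \<alpha>) z j \<gamma> * dY (vortexH m N \<Gamma>) z j \<gamma> - dY (Pc N \<Gamma> \<alpha>) z j \<gamma> * dX (vortexH m N \<Gamma>) z j \<gamma>)
    = (\<Sum>a=1..N. \<Sum>b=a+1..N. (- KK m \<Gamma> z a b * (Re (z a \<alpha>) - Re (z b \<alpha>))) * dl a b j)"
  using al g by (simp add: dY_P[OF j] dX_P if0_mult dXH[OF nc al] sum_negf)

lemma pj_Fp:
  assumes j: "j \<in> {1..N}" and al: "\<alpha> \<in> {1..m}" and be: "\<beta> \<in> {1..m}" and g: "\<Gamma> j \<noteq> 0" and nc: "noncollision m N z"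
  shows "(1 / \<Gamma> j) * (\<Sum>\<gamma>=1..m. dX (Fplus N \<Gamma> \<alpha> \<beta>) z j \<gamma> * dY (vortexH m N \<Gamma>) z j \<gamma> - dY (Fplus N \<Gamma> \<alpha> \<beta>) z j \<gamma> * dX (vortexH m N \<Gamma>) z j \<gamma>)
    = (\<Sum>a=1..N. \<Sum>b=a+1..N. (KK m \<Gamma> z a b * (Re (z j \<beta>) * (Im (z a \<alpha>) - Im (z b \<alpha>)) + Re (z j \<alpha>) * (Im (z a \<beta>) - Im (z b \<beta>))
        - Im (z j \<beta>) * (Re (z a \<alpha>) - Re (z b \<alpha>)) - Im (z j \<alpha>) * (Re (z a \<beta>) - Re (z b \<beta>)))) * dl a b j)"
proof -
  have "(\<Sum>\<gamma>=1..m. dX (Fplus N \<Gamma> \<alpha> \<beta>) z j \<gamma> * dY (vortexH m N \<Gamma>) z j \<gamma> - dY (Fplus N \<Gamma> \<alpha> \<beta>) z j \<gamma> * dX (vortexH m N \<Gamma>) z j \<gamma>)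
     = \<Gamma> j * (Re (z j \<beta>) * dY (vortexH m N \<Gamma>) z j \<alpha> + Re (z j \<alpha>) * dY (vortexH m N \<Gamma>) z j \<beta>
          - Im (z j \<beta>) * dX (vortexH m N \<Gamma>) z j \<alpha> - Im (z j \<alpha>) * dX (vortexH m N \<Gamma>) z j \<beta>)"
    using al be by (simp add: dX_Fp[OF j] dY_Fp[OF j] if0_mult ring_distribs sum.distrib sum_subtractf)
  then have e: "?thesis \<longleftrightarrow> Re (z j \<beta>) * dY (vortexH m N \<Gamma>) z j \<alpha> + Re (z j \<alpha>) * dY (vortexH m N \<Gamma>) z j \<beta>
          - Im (z j \<beta>) * dX (vortexH m N \<Gamma>) z j \<alpha> - Im (z j \<alpha>) * dX (vortexH m N \<Gamma>) z j \<beta> = (\<Sum>a=1..N. \<Sum>b=a+1..N. (KK m \<Gamma> z a b * (Re (z j \<beta>) * (Im (z a \<alpha>) - Im (z b \<alpha>)) + Re (z j \<alpha>) * (Im (z a \<beta>) - Im (z b \<beta>))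
        - Im (z j \<beta>) * (Re (z a \<alpha>) - Re (z b \<alpha>)) - Im (z j \<alpha>) * (Re (z a \<beta>) - Re (z b \<beta>)))) * dl a b j)"
    using g by simp
  have "(\<Sum>a=1..N. \<Sum>b=a+1..N. (KK m \<Gamma> z a b * (Re (z j \<beta>) * (Im (z a \<alpha>) - Im (z b \<alpha>)) + Re (z j \<alpha>) * (Im (z a \<beta>) - Im (z b \<beta>))
        - Im (z j \<beta>) * (Re (z a \<alpha>) - Re (z b \<alpha>)) - Im (z j \<alpha>) * (Re (z a \<beta>) - Re (z b \<beta>)))) * dl a b j)
     = (\<Sum>a=1..N. \<Sum>b=a+1..N. Re (z j \<beta>) * (KK m \<Gamma> z a b * (Im (z a \<alpha>) - Im (z b \<alpha>)) * dl a b j)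
         + Re (z j \<alpha>) * (KK m \<Gamma> z a b * (Im (z a \<beta>) - Im (z b \<beta>)) * dl a b j)
         - Im (z j \<beta>) * (KK m \<Gamma> z a b * (Re (z a \<alpha>) - Re (z b \<alpha>)) * dl a b j)
         - Im (z j \<alpha>) * (KK m \<Gamma> z a b * (Re (z a \<beta>) - Re (z b \<beta>)) * dl a b j))"
    by (intro sum.cong refl) (simp add: algebra_simps)
  also have "\<dots> = Re (z j \<beta>) * dY (vortexH m N \<Gamma>) z j \<alpha> + Re (z j \<alpha>) * dY (vortexH m N \<Gamma>) z j \<beta>
          - Im (z j \<beta>) * dX (vortexH m N \<Gamma>) z j \<alpha> - Im (z j \<alpha>) * dX (vortexH m N \<Gamma>) z j \<beta>"
    unfolding dXH[OF nc al] dYH[OF nc al] dXH[OF nc be] dYH[OF nc be]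
    by (simp only: sum.distrib sum_subtractf sum_distrib_left)
  finally show ?thesis using e by simp
qed

lemma pj_Fm:
  assumes j: "j \<in> {1..N}" and al: "\<alpha> \<in> {1..m}" and be: "\<beta> \<in> {1..m}" and g: "\<Gamma> j \<noteq> 0" and nc: "noncollision m N z"
  shows "(1 / \<Gamma> j) * (\<Sum>\<gamma>=1..m. dX (Fminus N \<Gamma> \<alpha> \<beta>) z j \<gamma> * dY (vortexH m N \<Gamma>) z j \<gamma> - dY (Fminus N \<Gamma> \<alpha> \<beta>) z j \<gamma> * dX (vortexH m N \<Gamma>) z j \<gamma>)
    = (\<Sum>a=1..N. \<Sum>b=a+1..N. (KK m \<Gamma> z a b * (Im (z j \<beta>) * (Im (z a \<alpha>) - Im (z b \<alpha>)) - Im (z j \<alpha>) * (Im (z a \<beta>) - Im (z b \<beta>))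
        - Re (z j \<alpha>) * (Re (z a \<beta>) - Re (z b \<beta>)) + Re (z j \<beta>) * (Re (z a \<alpha>) - Re (z b \<alpha>)))) * dl a b j)"
proof -
  have "(\<Sum>\<gamma>=1..m. dX (Fminus N \<Gamma> \<alpha> \<beta>) z j \<gamma> * dY (vortexH m N \<Gamma>) z j \<gamma> - dY (Fminus N \<Gamma> \<alpha> \<beta>) z j \<gamma> * dX (vortexH m N \<Gamma>) z j \<gamma>)
     = \<Gamma> j * (Im (z j \<beta>) * dY (vortexH m N \<Gamma>) z j \<alpha> - Im (z j \<alpha>) * dY (vortexH m N \<Gamma>) z j \<beta>
          - Re (z j \<alpha>) * dX (vortexH m N \<Gamma>) z j \<beta> + Re (z j \<beta>) * dX (vortexH m N \<Gamma>) z j \<alpha>)"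
    using al be by (simp add: dX_Fm[OF j] dY_Fm[OF j] if0_mult ring_distribs sum.distrib sum_subtractf)
  then have e: "?thesis \<longleftrightarrow> Im (z j \<beta>) * dY (vortexH m N \<Gamma>) z j \<alpha> - Im (z j \<alpha>) * dY (vortexH m N \<Gamma>) z j \<beta>
          - Re (z j \<alpha>) * dX (vortexH m N \<Gamma>) z j \<beta> + Re (z j \<beta>) * dX (vortexH m N \<Gamma>) z j \<alpha> = (\<Sum>a=1..N. \<Sum>b=a+1..N. (KK m \<Gamma> z a b * (Im (z j \<beta>) * (Im (z a \<alpha>) - Im (z b \<alpha>)) - Im (z j \<alpha>) * (Im (z a \<beta>) - Im (z b \<beta>))
        - Re (z j \<alpha>) * (Re (z a \<beta>) - Re (z b \<beta>)) + Re (z j \<beta>) * (Re (z a \<alpha>) - Re (z b \<alpha>)))) * dl a b j)"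
    using g by simp
  have "(\<Sum>a=1..N. \<Sum>b=a+1..N. (KK m \<Gamma> z a b * (Im (z j \<beta>) * (Im (z a \<alpha>) - Im (z b \<alpha>)) - Im (z j \<alpha>) * (Im (z a \<beta>) - Im (z b \<beta>))
        - Re (z j \<alpha>) * (Re (z a \<beta>) - Re (z b \<beta>)) + Re (z j \<beta>) * (Re (z a \<alpha>) - Re (z b \<alpha>)))) * dl a b j)
     = (\<Sum>a=1..N. \<Sum>b=a+1..N. Im (z j \<beta>) * (KK m \<Gamma> z a b * (Im (z a \<alpha>) - Im (z b \<alpha>)) * dl a b j)
         - Im (z j \<alpha>) * (KK m \<Gamma> z a b * (Im (z a \<beta>) - Im (z b \<beta>)) * dl a b j)
         - Re (z j \<alpha>) * (KK m \<Gamma> z a b * (Re (z a \<beta>) - Re (z b \<beta>)) * dl a b j)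
         + Re (z j \<beta>) * (KK m \<Gamma> z a b * (Re (z a \<alpha>) - Re (z b \<alpha>)) * dl a b j))"
    by (intro sum.cong refl) (simp add: algebra_simps)
  also have "\<dots> = Im (z j \<beta>) * dY (vortexH m N \<Gamma>) z j \<alpha> - Im (z j \<alpha>) * dY (vortexH m N \<Gamma>) z j \<beta>
          - Re (z j \<alpha>) * dX (vortexH m N \<Gamma>) z j \<beta> + Re (z j \<beta>) * dX (vortexH m N \<Gamma>) z j \<alpha>"
    unfolding dXH[OF nc al] dYH[OF nc al] dXH[OF nc be] dYH[OF nc be]
    by (simp only: sum.distrib sum_subtractf sum_distrib_left)
  finally show ?thesis using e by simp
qed

lemma unitary_norm:
  assumes u: "unitary_mat m U"
  shows "(\<Sum>\<alpha>=1..m. (cmod (\<Sum>\<beta>=1..m. U \<alpha> \<beta> * w \<beta>))\<^sup>2) = (\<Sum>\<beta>=1..m. (cmod (w \<beta>))\<^sup>2)"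
proof -
  have "complex_of_real (\<Sum>\<alpha>=1..m. (cmod (\<Sum>\<beta>=1..m. U \<alpha> \<beta> * w \<beta>))\<^sup>2)
      = (\<Sum>\<alpha>=1..m. (\<Sum>\<beta>=1..m. U \<alpha> \<beta> * w \<beta>) * cnj (\<Sum>\<gamma>=1..m. U \<alpha> \<gamma> * w \<gamma>))"
    by (simp only: of_real_sum complex_norm_square)
  also have "\<dots> = (\<Sum>\<alpha>=1..m. \<Sum>\<beta>=1..m. \<Sum>\<gamma>=1..m. w \<beta> * cnj (w \<gamma>) * (cnj (U \<alpha> \<gamma>) * U \<alpha> \<beta>))"
    by (simp add: sum_product mult_ac)
  also have "\<dots> = (\<Sum>\<beta>=1..m. \<Sum>\<alpha>=1..m. \<Sum>\<gamma>=1..m. w \<beta> * cnj (w \<gamma>) * (cnj (U \<alpha> \<gamma>) * U \<alpha> \<beta>))"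
    by (rule sum.swap)
  also have "\<dots> = (\<Sum>\<beta>=1..m. \<Sum>\<gamma>=1..m. \<Sum>\<alpha>=1..m. w \<beta> * cnj (w \<gamma>) * (cnj (U \<alpha> \<gamma>) * U \<alpha> \<beta>))"
    by (rule sum.cong[OF refl], rule sum.swap)
  also have "\<dots> = (\<Sum>\<beta>=1..m. \<Sum>\<gamma>=1..m. w \<beta> * cnj (w \<gamma>) * (if \<gamma> = \<beta> then 1 else 0))"
  proof (intro sum.cong refl)
    fix \<beta> \<gamma> assume "\<beta> \<in> {1..m}" "\<gamma> \<in> {1..m}"
    then show "(\<Sum>\<alpha>=1..m. w \<beta> * cnj (w \<gamma>) * (cnj (U \<alpha> \<gamma>) * U \<alpha> \<beta>)) = w \<beta> * cnj (w \<gamma>) * (if \<gamma> = \<beta> then 1 else 0)"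
      using u unfolding unitary_mat_def by (simp add: sum_distrib_left[symmetric])
  qed
  also have "\<dots> = (\<Sum>\<beta>=1..m. w \<beta> * cnj (w \<beta>))"
    by (rule sum.cong[OF refl]) (simp add: if_distrib cong: if_cong)
  also have "\<dots> = complex_of_real (\<Sum>\<beta>=1..m. (cmod (w \<beta>))\<^sup>2)"
    by (simp only: of_real_sum complex_norm_square)
  finally show ?thesis by (simp only: of_real_eq_iff)
qed

lemma dist2_motion:
  assumes u: "unitary_mat m U"
  shows "dist2 m (motion m U b z) j k = dist2 m z j k"
proof -
  have "dist2 m (motion m U b z) j k = (\<Sum>\<alpha>=1..m. (cmod (\<Sum>\<beta>=1..m. U \<alpha> \<beta> * (z j \<beta> - z k \<beta>)))\<^sup>2)"
    unfolding dist2_def motion_def by (simp add: right_diff_distrib sum_subtractf)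
  also have "\<dots> = dist2 m z j k" unfolding dist2_def by (rule unitary_norm[OF u])
  finally show ?thesis .
qed

lemma vortexH_motion:
  assumes u: "unitary_mat m U"
  shows "vortexH m N \<Gamma> (motion m U b z) = vortexH m N \<Gamma> z"
  unfolding vortexH_alt dist2_motion[OF u] ..

theorem theorem4p2:
  fixes m N :: nat and \<Gamma> :: "nat \<Rightarrow> real"
  assumes "m \<ge> 1"
    and "\<forall>j\<in>{1..N}. \<Gamma> j \<noteq> 0"
  shows "(\<forall>U b z. unitary_mat m U \<longrightarrow> vortexH m N \<Gamma> (motion m U b z) = vortexH m N \<Gamma> z)
       \<and> (\<forall>z. noncollision m N z \<longrightarrow>
            (\<forall>\<alpha>\<in>{1..m}. poisson m N \<Gamma> (Qc N \<Gamma> \<alpha>) (vortexH m N \<Gamma>) z = 0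
                       \<and> poisson m N \<Gamma> (Pc N \<Gamma> \<alpha>) (vortexH m N \<Gamma>) z = 0)
          \<and> (\<forall>\<alpha> \<beta>. 1 \<le> \<alpha> \<and> \<alpha> \<le> \<beta> \<and> \<beta> \<le> m \<longrightarrow>
                poisson m N \<Gamma> (Fplus N \<Gamma> \<alpha> \<beta>) (vortexH m N \<Gamma>) z = 0)
          \<and> (\<forall>\<alpha> \<beta>. 1 \<le> \<alpha> \<and> \<alpha> < \<beta> \<and> \<beta> \<le> m \<longrightarrow>
                poisson m N \<Gamma> (Fminus N \<Gamma> \<alpha> \<beta>) (vortexH m N \<Gamma>) z = 0))"
proof (intro conjI allI impI ballI)
  fix U b z assume "unitary_mat m U"
  then show "vortexH m N \<Gamma> (motion m U b z) = vortexH m N \<Gamma> z" by (rule vortexH_motion)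
next
  fix z \<alpha> assume nc: "noncollision m N z" and al: "\<alpha> \<in> {1..m}"
  have "poisson m N \<Gamma> (Qc N \<Gamma> \<alpha>) (vortexH m N \<Gamma>) z
      = (\<Sum>j=1..N. \<Sum>a=1..N. \<Sum>b=a+1..N. (KK m \<Gamma> z a b * (Im (z a \<alpha>) - Im (z b \<alpha>))) * dl a b j)"
    unfolding poisson_def by (intro sum.cong refl pj_Q al nc) (use assms(2) in auto)
  also have "\<dots> = 0" unfolding swap_delta by simp
  finally show "poisson m N \<Gamma> (Qc N \<Gamma> \<alpha>) (vortexH m N \<Gamma>) z = 0" .
  have "poisson m N \<Gamma> (Pc N \<Gamma> \<alpha>) (vortexH m N \<Gamma>) z
      = (\<Sum>j=1..N. \<Sum>a=1..N. \<Sum>b=a+1..N. (- KK m \<Gamma> z a b * (Re (z a \<alpha>) - Re (z b \<alpha>))) * dl a b j)"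
    unfolding poisson_def by (intro sum.cong refl pj_P al nc) (use assms(2) in auto)
  also have "\<dots> = 0" unfolding swap_delta by simp
  finally show "poisson m N \<Gamma> (Pc N \<Gamma> \<alpha>) (vortexH m N \<Gamma>) z = 0" .
next
  fix z \<alpha> \<beta> assume nc: "noncollision m N z" and ab: "1 \<le> \<alpha> \<and> \<alpha> \<le> \<beta> \<and> \<beta> \<le> m"
  then have al: "\<alpha> \<in> {1..m}" and be: "\<beta> \<in> {1..m}" by auto
  have "poisson m N \<Gamma> (Fplus N \<Gamma> \<alpha> \<beta>) (vortexH m N \<Gamma>) z
      = (\<Sum>j=1..N. \<Sum>a=1..N. \<Sum>b=a+1..N. (KK m \<Gamma> z a b * (Re (z j \<beta>) * (Im (z a \<alpha>) - Im (z b \<alpha>)) + Re (z j \<alpha>) * (Im (z a \<beta>) - Im (z b \<beta>))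
        - Im (z j \<beta>) * (Re (z a \<alpha>) - Re (z b \<alpha>)) - Im (z j \<alpha>) * (Re (z a \<beta>) - Re (z b \<beta>)))) * dl a b j)"
    unfolding poisson_def by (intro sum.cong refl pj_Fp al be nc) (use assms(2) in auto)
  also have "\<dots> = 0" unfolding swap_delta by (intro sum.neutral ballI) (simp add: algebra_simps)
  finally show "poisson m N \<Gamma> (Fplus N \<Gamma> \<alpha> \<beta>) (vortexH m N \<Gamma>) z = 0" .
next
  fix z \<alpha> \<beta> assume nc: "noncollision m N z" and ab: "1 \<le> \<alpha> \<and> \<alpha> < \<beta> \<and> \<beta> \<le> m"
  then have al: "\<alpha> \<in> {1..m}" and be: "\<beta> \<in> {1..m}" by auto
  have "poisson m N \<Gamma> (Fminus N \<Gamma> \<alpha> \<beta>) (vortexH m N \<Gamma>) z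
      = (\<Sum>j=1..N. \<Sum>a=1..N. \<Sum>b=a+1..N. (KK m \<Gamma> z a b * (Im (z j \<beta>) * (Im (z a \<alpha>) - Im (z b \<alpha>)) - Im (z j \<alpha>) * (Im (z a \<beta>) - Im (z b \<beta>))
        - Re (z j \<alpha>) * (Re (z a \<beta>) - Re (z b \<beta>)) + Re (z j \<beta>) * (Re (z a \<alpha>) - Re (z b \<alpha>)))) * dl a b j)"
    unfolding poisson_def by (intro sum.cong refl pj_Fm al be nc) (use assms(2) in auto)
  also have "\<dots> = 0" unfolding swap_delta by (intro sum.neutral ballI) (simp add: algebra_simps)
  finally show "poisson m N \<Gamma> (Fminus N \<Gamma> \<alpha> \<beta>) (vortexH m N \<Gamma>) z = 0" .
qed

end
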